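(* Let $(\mu,\sigma)\in\mathbb{K}[[\mathtt{x}]]\times\mathfrak{M}$ be topologically nilpotent, i.e. $\lim_{n\to\infty}(\mu,\sigma)^{\rtimes n}=(0,0)$. Then for every sequence of scalars $(\alpha_n)_{n\in\mathbb{N}}$ in $\mathbb{K}$, the family $(\alpha_n(\mu,\sigma)^{\rtimes n})_{n\in\mathbb{N}}$ is summable in $\mathbb{K}[[\mathtt{x}]]\times\mathfrak{M}$.
   Context: $\mathbb{K}$ is a field of characteristic zero (discrete topology); $\mathbb{K}[[\mathtt{x}]]$ has the $(\mathtt{x})$-adic topology; $\mathfrak{M}:=\mathtt{x}\mathbb{K}[[\mathtt{x}]]$ the subspace topology; $\mathbb{K}[[\mathtt{x}]]\times\mathfrak{M}$ the product topology and componentwise vector space structure. For $f=\sum f_n\mathtt{x}^n$ and $\sigma\in\mathfrak{M}$, $f\circ\sigma:=\sum f_n\sigma^n$. Product: $(\mu_1,\sigma_1)\rtimes(\mu_2,\sigma_2):=((\mu_1\circ\sigma_2)\mu_2,\sigma_1\circ\sigma_2)$; powers $(\mu,\sigma)^{\rtimes0}:=(1,\mathtt{x})$, $(\mu,\sigma)^{\rtimes n}$ the $n$-fold product. A family $(u_n)$ in a Hausdorff commutative topological group is summable if the net of finite partial sums over finite subsets of $\mathbb{N}$ (ordered by inclusion) converges. *)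

theory Defs
  imports "HOL-Analysis.Analysis" "HOL-Computational_Algebra.Formal_Power_Series"
begin

definition fpsM :: "'a::field fps set" where
  "fpsM = {s. fps_nth s 0 = 0}"

definition sdp :: "'a::field fps \<times> 'a fps \<Rightarrow> 'a fps \<times> 'a fps \<Rightarrow> 'a fps \<times> 'a fps" where
  "sdp p q = ((fst p oo snd q) * fst q, snd p oo snd q)"

fun sdpow :: "'a::field fps \<times> 'a fps \<Rightarrow> nat \<Rightarrow> 'a fps \<times> 'a fps" where
  "sdpow p 0 = (1, fps_X)"
| "sdpow p (Suc n) = sdp p (sdpow p n)"

definition sscale :: "'a::field \<Rightarrow> 'a fps \<times> 'a fps \<Rightarrow> 'a fps \<times> 'a fps" where
  "sscale c p = (fps_const c * fst p, fps_const c * snd p)"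

end

theory Submission
  imports Defs
begin

lemma fps_family_has_sum:
  fixes h :: "nat \<Rightarrow> 'a::field fps"
  assumes ev: "\<And>k. eventually (\<lambda>n. fps_nth (h n) k = 0) sequentially"
  shows "\<exists>s. (h has_sum s) UNIV \<and> ((\<forall>n. fps_nth (h n) 0 = 0) \<longrightarrow> fps_nth (s) 0 = 0)"
proof -
  have "\<forall>k. \<exists>N. \<forall>n\<ge>N. fps_nth (h n) k = 0" using ev by (simp add: eventually_sequentially)
  then obtain N where N: "\<And>k n. n \<ge> N k \<Longrightarrow> fps_nth (h n) k = 0" by metis
  define s where "s = Abs_fps (\<lambda>k. \<Sum>n<N k. fps_nth (h n) k)"
  have key: "fps_nth (sum h F) k = fps_nth (s) k" if "finite F" "{..<N k} \<subseteq> F" for F k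
  proof -
    have "fps_nth (sum h F) k = (\<Sum>n\<in>F. fps_nth (h n) k)" by (simp add: fps_sum_nth)
    also have "\<dots> = (\<Sum>n<N k. fps_nth (h n) k)"
      by (rule sum.mono_neutral_right) (use that N in \<open>auto simp: not_less\<close>)
    finally show ?thesis by (simp add: s_def)
  qed
  have "(h has_sum s) UNIV"
    unfolding has_sum_def
  proof (rule tendsto_fpsI)
    fix k
    show "eventually (\<lambda>F. fps_nth (sum h F) k = fps_nth (s) k) (finite_subsets_at_top UNIV)"
      unfolding eventually_finite_subsets_at_top
      by (rule exI[of _ "{..<N k}"]) (auto intro: key)
  qed
  moreover have "(\<forall>n. fps_nth (h n) 0 = 0) \<longrightarrow> fps_nth (s) 0 = 0" by (simp add: s_def)
  ultimately show ?thesis by blast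
qed

lemma snd_sdpow0: "fps_nth (\<sigma>) 0 = 0 \<Longrightarrow> fps_nth (snd (sdpow (\<mu>, \<sigma>) n)) 0 = 0"
  by (induction n) (auto simp: sdp_def)

theorem mainTheorem6:
  fixes \<mu> \<sigma> :: "'a::field_char_0 fps" and \<alpha> :: "nat \<Rightarrow> 'a"
  assumes "\<sigma> \<in> fpsM"
    and "(\<lambda>n. sdpow (\<mu>, \<sigma>) n) \<longlonglongrightarrow> (0, 0)"
  shows "\<exists>s. ((\<lambda>n. sscale (\<alpha> n) (sdpow (\<mu>, \<sigma>) n)) has_sum s) UNIV \<and> snd s \<in> fpsM"
proof -
  let ?f = "\<lambda>n. sscale (\<alpha> n) (sdpow (\<mu>, \<sigma>) n)"
  have s0: "fps_nth (\<sigma>) 0 = 0" using assms(1) by (simp add: fpsM_def)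
  have l1: "(\<lambda>n. fst (sdpow (\<mu>, \<sigma>) n)) \<longlonglongrightarrow> 0" using tendsto_fst[OF assms(2)] by simp
  have l2: "(\<lambda>n. snd (sdpow (\<mu>, \<sigma>) n)) \<longlonglongrightarrow> 0" using tendsto_snd[OF assms(2)] by simp
  have e1: "eventually (\<lambda>n. fps_nth (fst (?f n)) k = 0) sequentially" for k
    using l1[unfolded tendsto_fps_iff, rule_format, of k]
    by eventually_elim (simp add: sscale_def)
  have e2: "eventually (\<lambda>n. fps_nth (snd (?f n)) k = 0) sequentially" for k
    using l2[unfolded tendsto_fps_iff, rule_format, of k]
    by eventually_elim (simp add: sscale_def)
  obtain a where a: "((\<lambda>n. fst (?f n)) has_sum a) UNIV"
    using fps_family_has_sum[OF e1] by blast
  obtain b where b: "((\<lambda>n. snd (?f n)) has_sum b) UNIV" and b0: "(\<forall>n. fps_nth (snd (?f n)) 0 = 0) \<longrightarrow> fps_nth (b) 0 = 0"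
    using fps_family_has_sum[OF e2] by blast
  have "\<forall>n. fps_nth (snd (?f n)) 0 = 0" using snd_sdpow0[OF s0] by (simp add: sscale_def)
  with b0 have "fps_nth (b) 0 = 0" by blast
  have "(?f has_sum (a, b)) UNIV"
    unfolding has_sum_def
  proof -
    have "((\<lambda>F. (sum (\<lambda>n. fst (?f n)) F, sum (\<lambda>n. snd (?f n)) F)) \<longlongrightarrow> (a, b)) (finite_subsets_at_top UNIV)"
      using a b unfolding has_sum_def by (rule tendsto_Pair)
    moreover have "sum ?f = (\<lambda>F. (sum (\<lambda>n. fst (?f n)) F, sum (\<lambda>n. snd (?f n)) F))"
      by (rule ext, rule prod_eqI) (simp_all only: fst_sum snd_sum fst_conv snd_conv)
    ultimately show "(sum ?f \<longlongrightarrow> (a, b)) (finite_subsets_at_top UNIV)" by (simp only:)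
  qed
  with \<open>fps_nth (b) 0 = 0\<close> show ?thesis by (auto simp: fpsM_def)
qed

end
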